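(* Let $\mathcal{X}=\mathbb{R}$, let $t_1,\dots,t_n$ be $n$ distinct real numbers, and let $\mathcal{H}=\{x\mapsto 2I(x\le t)-1: t\in\{t_1,\dots,t_n\}\}$. Then for every integer $k\ge0$, \[ \mathrm{ELdim}(\mathcal{H},k)=\max\Big\{t:\binom{t}{\le k+1}\le n\Big\}. \]
   Context: $\binom{t}{\le j}=\sum_{i=0}^{j}\binom{t}{i}$. Extended mistake tree w.r.t. $\mathcal{H}$: a finite full binary tree (possibly a single leaf) in which each internal node $v$ is labeled by $x_v\in\mathcal{X}$ and has two solid downward edges, to its left child (label $-1$) and right child (label $+1$), plus one dashed downward edge to one of its two children; each leaf is labeled by some $h\in\mathcal{H}$ with $h(x_v)$ equal to the direction label at every internal node $v$ on the root-to-leaf path. A root-to-leaf path chooses at each internal node one downward edge; its length is its number of edges. The tree is $(k,m)$-difficult if every root-to-leaf path using at most $k$ solid edges has length at least $m$. $\mathrm{ELdim}(\mathcal{H},k)$ is the supremum of $m$ such that a $(k,m)$-difficult extended mistake tree w.r.t. $\mathcal{H}$ exists. *)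

theory Defs
  imports Main "HOL-Library.Extended_Nat"
begin

definition binom_le :: "nat \<Rightarrow> nat \<Rightarrow> nat" where
  "binom_le t j = (\<Sum>i\<le>j. t choose i)"

text \<open>Internal node: instance label x, left child (label -1),
  right child (label +1), and a flag saying where the dashed edge goes
  (False = left child, True = right child).\<close>
datatype ('x, 'h) xtree =
    Leaf 'h
  | Node 'x "('x, 'h) xtree" "('x, 'h) xtree" bool

fun consistent_from :: "('x \<Rightarrow> int) set \<Rightarrow> ('x \<times> int) list \<Rightarrow> ('x, 'x \<Rightarrow> int) xtree \<Rightarrow> bool" where
  "consistent_from H cs (Leaf h) = (h \<in> H \<and> (\<forall>(x, y) \<in> set cs. h x = y))"
| "consistent_from H cs (Node x l r d) =
     (consistent_from H ((x, -1) # cs) l \<and> consistent_from H ((x, 1) # cs) r)"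

definition ext_mistake_tree :: "('x \<Rightarrow> int) set \<Rightarrow> ('x, 'x \<Rightarrow> int) xtree \<Rightarrow> bool" where
  "ext_mistake_tree H T = consistent_from H [] T"

text \<open>All root-to-leaf paths, recorded as (number of solid edges, length).\<close>
fun path_stats :: "('x, 'h) xtree \<Rightarrow> (nat \<times> nat) set" where
  "path_stats (Leaf h) = {(0, 0)}"
| "path_stats (Node x l r d) =
     {(Suc s, Suc len) | s len. (s, len) \<in> path_stats l \<union> path_stats r}
   \<union> {(s, Suc len) | s len. (s, len) \<in> path_stats (if d then r else l)}"

definition difficult :: "nat \<Rightarrow> nat \<Rightarrow> ('x, 'h) xtree \<Rightarrow> bool" where
  "difficult k m T = (\<forall>(s, len) \<in> path_stats T. s \<le> k \<longrightarrow> m \<le> len)"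

definition ELdim :: "('x \<Rightarrow> int) set \<Rightarrow> nat \<Rightarrow> enat" where
  "ELdim H k = Sup {enat m | m. \<exists>T. ext_mistake_tree H T \<and> difficult k m T}"

definition thresholds :: "real set \<Rightarrow> (real \<Rightarrow> int) set" where
  "thresholds T = {(\<lambda>x. if x \<le> t then 1 else -1) | t. t \<in> T}"

end

theory Submission
  imports Defs
begin

definition thr :: "real \<Rightarrow> real \<Rightarrow> int" where
  "thr t = (\<lambda>x. if x \<le> t then 1 else -1)"

lemma thresholds_eq: "thresholds Ts = thr ` Ts"
  by (auto simp: thresholds_def thr_def)

definition VS :: "('x \<Rightarrow> int) set \<Rightarrow> ('x \<times> int) list \<Rightarrow> ('x \<Rightarrow> int) set" where
  "VS H cs = {h\<in>H. \<forall>(x,y)\<in>set cs. h x = y}"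

lemma binom_le_0: "binom_le 0 j = 1"
  unfolding binom_le_def by (induction j) auto

lemma binom_le_0': "binom_le m 0 = 1"
  unfolding binom_le_def by simp

lemma binom_le_Suc: "binom_le (Suc m) (Suc j) = binom_le m (Suc j) + binom_le m j"
proof -
  have "binom_le (Suc m) (Suc j) = 1 + (\<Sum>i\<le>j. Suc m choose Suc i)"
    unfolding binom_le_def by (subst sum.atMost_Suc_shift) simp
  also have "\<dots> = 1 + (\<Sum>i\<le>j. m choose i) + (\<Sum>i\<le>j. m choose Suc i)"
    by (simp add: sum.distrib)
  also have "binom_le m (Suc j) = 1 + (\<Sum>i\<le>j. m choose Suc i)"
    unfolding binom_le_def by (subst sum.atMost_Suc_shift) simp
  ultimately show ?thesis unfolding binom_le_def by simp
qed

lemma binom_le_ge: "Suc t \<le> binom_le t (Suc j)"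
proof -
  have "(\<Sum>i\<le>1. t choose i) \<le> (\<Sum>i\<le>Suc j. t choose i)"
    by (rule sum_mono2) auto
  then show ?thesis unfolding binom_le_def by simp
qed

lemma VS_nonempty: "consistent_from H cs T \<Longrightarrow> VS H cs \<noteq> {}"
proof (induction T arbitrary: cs)
  case (Leaf h) then show ?case by (auto simp: VS_def)
next
  case (Node x l r d)
  then have "VS H ((x,-1)#cs) \<noteq> {}" by simp
  moreover have "VS H ((x,-1)#cs) \<subseteq> VS H cs" by (auto simp: VS_def)
  ultimately show ?case by blast
qed

lemma diff_mono: "difficult k m T \<Longrightarrow> k' \<le> k \<Longrightarrow> difficult k' m T"
  unfolding difficult_def by auto

lemma diff_leaf: "difficult k m (Leaf h) \<Longrightarrow> m = 0"
  unfolding difficult_def by auto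

lemma diff_dashed:
  assumes "difficult k (Suc m) (Node x l r d)" shows "difficult k m (if d then r else l)"
proof -
  { fix s len assume a: "(s,len) \<in> path_stats (if d then r else l)" "s \<le> k"
    have "(s, Suc len) \<in> path_stats (Node x l r d)" using a(1) by simp
    hence "Suc m \<le> Suc len" using assms a(2) unfolding difficult_def by blast
    hence "m \<le> len" by simp }
  thus ?thesis unfolding difficult_def by blast
qed

lemma diff_solid:
  assumes "difficult (Suc k) (Suc m) (Node x l r d)" shows "difficult k m l \<and> difficult k m r"
proof -
  { fix s len assume a: "(s,len) \<in> path_stats l \<union> path_stats r" "s \<le> k"
    have "(Suc s, Suc len) \<in> path_stats (Node x l r d)" using a(1) by simp
    hence "Suc m \<le> Suc len" using assms a(2) unfolding difficult_def by blast
    hence "m \<le> len" by simp }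
  thus ?thesis unfolding difficult_def by blast
qed

lemma diff_node:
  assumes D: "difficult k m (if d then r else l)"
    and S: "\<forall>k'. k = Suc k' \<longrightarrow> difficult k' m l \<and> difficult k' m r"
  shows "difficult k (Suc m) (Node x l r d)"
proof -
  { fix s len assume a: "(s,len) \<in> path_stats (Node x l r d)" "s \<le> k"
    then consider (sol) s' len' where "s = Suc s'" "len = Suc len'" "(s',len') \<in> path_stats l \<union> path_stats r"
      | (das) len' where "len = Suc len'" "(s,len') \<in> path_stats (if d then r else l)"
      by auto
    hence "Suc m \<le> len"
    proof cases
      case sol
      then obtain k' where k': "k = Suc k'" "s' \<le> k'" using a(2) by (cases k) auto
      then have "difficult k' m l" "difficult k' m r" using S by auto
      then show ?thesis using sol k'(2) unfolding difficult_def by auto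
    next
      case das then show ?thesis using D a(2) unfolding difficult_def by auto
    qed }
  thus ?thesis unfolding difficult_def by blast
qed

lemma ub: "finite H \<Longrightarrow> consistent_from H cs T \<Longrightarrow> difficult k m T \<Longrightarrow>
   binom_le m (k+1) \<le> card (VS H cs)"
proof (induction T arbitrary: cs k m)
  case (Leaf h)
  have "m = 0" using diff_leaf[OF Leaf(3)] .
  moreover have "VS H cs \<noteq> {}" using VS_nonempty[OF Leaf(2)] .
  moreover have "finite (VS H cs)" using Leaf(1) by (simp add: VS_def)
  ultimately show ?case by (simp add: binom_le_0 Suc_leI card_gt_0_iff)
next
  case (Node x l r d)
  have fin: "finite (VS H cs)" using Node(3) by (simp add: VS_def)
  have ne: "VS H cs \<noteq> {}" using VS_nonempty[OF Node(4)] .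
  show ?case
  proof (cases m)
    case 0 then show ?thesis using fin ne by (simp add: binom_le_0 Suc_leI card_gt_0_iff)
  next
    case (Suc m')
    define VL where "VL = VS H ((x,-1)#cs)"
    define VR where "VR = VS H ((x,1)#cs)"
    have sub: "VL \<union> VR \<subseteq> VS H cs" and disj: "VL \<inter> VR = {}"
      by (auto simp: VL_def VR_def VS_def)
    have fL: "finite VL" "finite VR" using fin sub finite_subset by auto
    have cardsum: "card VL + card VR \<le> card (VS H cs)"
      using card_Un_disjoint[OF fL disj] card_mono[OF fin sub] by simp
    have cl: "consistent_from H ((x,-1)#cs) l" and cr: "consistent_from H ((x,1)#cs) r"
      using Node(4) by auto
    have dd: "difficult k m' (if d then r else l)" using diff_dashed[OF Node(5)[unfolded Suc]] .
    have neL: "VL \<noteq> {}" "VR \<noteq> {}" using cl cr VS_nonempty VL_def VR_def by auto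
    have other: "binom_le m' k \<le> card VL \<and> binom_le m' k \<le> card VR"
    proof (cases k)
      case 0 then show ?thesis using neL fL by (simp add: binom_le_0' Suc_leI card_gt_0_iff)
    next
      case (Suc k')
      then have "difficult k' m' l \<and> difficult k' m' r"
        using diff_solid[OF Node(5)[unfolded \<open>m = Suc m'\<close> Suc]] by blast
      then have "difficult k' m' l" "difficult k' m' r" by blast+
      then have "binom_le m' (k'+1) \<le> card VL" "binom_le m' (k'+1) \<le> card VR"
        using Node.IH(1)[OF Node(3) cl] Node.IH(2)[OF Node(3) cr] unfolding VL_def VR_def by blast+
      then show ?thesis using Suc by simp
    qed
    have dash: "binom_le m' (k+1) \<le> (if d then card VR else card VL)"
    proof (cases d)
      case True then show ?thesis using dd Node.IH(2)[OF Node(3) cr] unfolding VR_def by simp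
    next
      case False then show ?thesis using dd Node.IH(1)[OF Node(3) cl] unfolding VL_def by simp
    qed
    have "binom_le m (k+1) = binom_le m' (k+1) + binom_le m' k"
      using Suc binom_le_Suc by simp
    also have "\<dots> \<le> card VL + card VR"
    proof (cases d)
      case True then show ?thesis using dash other by (simp add: add.commute add_mono)
    next
      case False then show ?thesis using dash other by (simp add: add_mono)
    qed
    finally show ?thesis using cardsum by simp
  qed
qed

lemma lb: "sorted_wrt (<) xs \<Longrightarrow> set xs \<subseteq> Ts \<Longrightarrow> xs \<noteq> [] \<Longrightarrow>
  binom_le m (k+1) \<le> length xs \<Longrightarrow> (\<forall>t\<in>set xs. \<forall>(x,y)\<in>set cs. thr t x = y) \<Longrightarrow>
  \<exists>T. consistent_from (thresholds Ts) cs T \<and> difficult k m T"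
proof (induction m arbitrary: k xs cs)
  case 0
  have h: "hd xs \<in> set xs" using hd_in_set[OF 0(3)] .
  have "hd xs \<in> Ts" using h 0(2) by blast
  then have "thr (hd xs) \<in> thresholds Ts" by (simp add: thresholds_eq)
  moreover have "\<forall>(x,y)\<in>set cs. thr (hd xs) x = y" using bspec[OF 0(5) h] .
  ultimately have "consistent_from (thresholds Ts) cs (Leaf (thr (hd xs)))" by simp
  moreover have "difficult k 0 (Leaf (thr (hd xs)))" by (auto simp: difficult_def)
  ultimately show ?case by blast
next
  case (Suc m')
  note IH = Suc.IH
  note P = Suc.prems
  define a where "a = binom_le m' (k+1)"
  have eq: "binom_le (Suc m') (k+1) = a + binom_le m' k"
    using binom_le_Suc a_def by simp
  have a1: "a \<ge> 1" unfolding a_def using binom_le_ge[of m' k] by simp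
  have b1: "binom_le m' k \<ge> 1"
    by (cases k) (auto simp: binom_le_0' intro: order_trans[OF _ binom_le_ge])
  have alen: "a < length xs" using Suc(5) eq b1 by linarith
  define A where "A = take a xs"
  define B where "B = drop a xs"
  define x where "x = xs ! a"
  have srt: "sorted_wrt (<) xs" using Suc.prems(1) .
  have Alt: "t < x" if mem: "t \<in> set A" for t
  proof -
    obtain i where "i < length A" "A ! i = t" using iffD1[OF in_set_conv_nth mem] by blast
    then have "i < a" "t = xs ! i" using alen unfolding A_def by auto
    then show ?thesis using sorted_wrt_nth_less[OF Suc(2) \<open>i < a\<close> alen] unfolding x_def by simp
  qed
  have Bge: "x \<le> t" if mem: "t \<in> set B" for t
  proof -
    obtain i where "i < length B" "B ! i = t" using iffD1[OF in_set_conv_nth mem] by blast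
    then have "a + i < length xs" "t = xs ! (a + i)" using alen unfolding B_def by auto
    then show ?thesis
    proof (cases i)
      case 0 then show ?thesis using \<open>t = xs ! (a + i)\<close> x_def by simp
    next
      case (Suc j)
      then have "a < a + i" by simp
      from sorted_wrt_nth_less[OF srt this \<open>a + i < length xs\<close>]
      show ?thesis using \<open>t = xs ! (a + i)\<close> x_def by simp
    qed
  qed
  have csA: "\<forall>t\<in>set A. \<forall>(x',y)\<in>set ((x,-1)#cs). thr t x' = y"
  proof
    fix t assume m: "t \<in> set A"
    have lt: "t < x" using Alt[OF m] .
    have "t \<in> set xs" using m set_take_subset[of a xs] unfolding A_def by blast
    from bspec[OF Suc(6) this] have "\<forall>(x',y)\<in>set cs. thr t x' = y" .
    then show "\<forall>(x',y)\<in>set ((x,-1)#cs). thr t x' = y" using lt by (simp add: thr_def)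
  qed
  have csB: "\<forall>t\<in>set B. \<forall>(x',y)\<in>set ((x,1)#cs). thr t x' = y"
  proof
    fix t assume m: "t \<in> set B"
    have lt: "x \<le> t" using Bge[OF m] .
    have "t \<in> set xs" using m set_drop_subset[of a xs] unfolding B_def by blast
    from bspec[OF Suc(6) this] have "\<forall>(x',y)\<in>set cs. thr t x' = y" .
    then show "\<forall>(x',y)\<in>set ((x,1)#cs). thr t x' = y" using lt by (simp add: thr_def)
  qed
  have sA: "sorted_wrt (<) A" "sorted_wrt (<) B" using Suc(2) by (auto simp: A_def B_def sorted_wrt_take sorted_wrt_drop)
  have tA: "set A \<subseteq> Ts" "set B \<subseteq> Ts"
    using subset_trans[OF set_take_subset[of a xs] Suc(3)] subset_trans[OF set_drop_subset[of a xs] Suc(3)]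
    unfolding A_def B_def by simp_all
  have lA: "length A = a" "length B = length xs - a" using alen by (auto simp: A_def B_def)
  have neA: "A \<noteq> []" "B \<noteq> []" using lA a1 alen by auto
  have "binom_le m' (k+1) \<le> length A" using lA(1) a_def by simp
  from IH[OF sA(1) tA(1) neA(1) this csA]
  obtain L where L: "consistent_from (thresholds Ts) ((x,-1)#cs) L" "difficult k m' L" by blast
  obtain R where R: "consistent_from (thresholds Ts) ((x,1)#cs) R"
    "\<forall>k'. k = Suc k' \<longrightarrow> difficult k' m' R"
  proof (cases k)
    case 0
    have h: "hd B \<in> set B" using hd_in_set[OF neA(2)] .
    have "hd B \<in> Ts" using tA(2) h by blast
    then have "thr (hd B) \<in> thresholds Ts" by (simp add: thresholds_eq)
    moreover have "\<forall>(x',y)\<in>set ((x,1)#cs). thr (hd B) x' = y" using bspec[OF csB h] .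
    ultimately have "consistent_from (thresholds Ts) ((x,1)#cs) (Leaf (thr (hd B)))" by simp
    moreover have "\<forall>k''. k = Suc k'' \<longrightarrow> difficult k'' m' (Leaf (thr (hd B)))" using 0 by simp
    ultimately show ?thesis using that by blast
  next
    case (Suc k')
    have "binom_le m' k \<le> length B" using lA eq P(4) by linarith
    then have "binom_le m' (k'+1) \<le> length B" using Suc by simp
    then obtain R where R1: "consistent_from (thresholds Ts) ((x,1)#cs) R" and R2: "difficult k' m' R"
      using IH[OF sA(2) tA(2) neA(2) _ csB] by blast
    have "\<forall>k''. k = Suc k'' \<longrightarrow> difficult k'' m' R" using R2 Suc by simp
    then show ?thesis using that R1 by blast
  qed
  have "difficult k (Suc m') (Node x L R False)"
  proof (rule diff_node)
    show "difficult k m' (if False then R else L)" using L(2) by simp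
    show "\<forall>k'. k = Suc k' \<longrightarrow> difficult k' m' L \<and> difficult k' m' R"
      using R(2) diff_mono[OF L(2)] by simp
  qed
  moreover have "consistent_from (thresholds Ts) cs (Node x L R False)" using L R by simp
  ultimately show ?case by blast
qed

theorem mainTheorem9:
  fixes Ts :: "real set" and n k :: nat
  assumes "finite Ts" and "card Ts = n" and "n \<ge> 1"
  shows "ELdim (thresholds Ts) k = enat (Max {t. binom_le t (k + 1) \<le> n})"
proof -
  define S where "S = {t. binom_le t (k + 1) \<le> n}"
  define M where "M = Max S"
  have le: "t \<le> n" if "binom_le t (k+1) \<le> n" for t using binom_le_ge[of t k] that by simp
  have Ssub: "S \<subseteq> {..n}" unfolding S_def using le by auto
  have finS: "finite S" using Ssub finite_subset by blast
  have "0 \<in> S" unfolding S_def using assms(3) by (simp add: binom_le_0)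
  then have MS: "M \<in> S" using finS M_def Max_in by blast
  have finH: "finite (thresholds Ts)" using assms(1) by (simp add: thresholds_eq)
  have cardH: "card (thresholds Ts) \<le> n" using card_image_le[OF assms(1), of thr] assms(2) by (simp add: thresholds_eq)
  have VS0: "VS H [] = H" for H :: "(real \<Rightarrow> int) set" by (simp add: VS_def)
  let ?X = "{enat m | m. \<exists>T. ext_mistake_tree (thresholds Ts) T \<and> difficult k m T}"
  have up: "y \<le> enat M" if yX: "y \<in> ?X" for y
  proof -
    obtain m T where "y = enat m" "consistent_from (thresholds Ts) [] T" "difficult k m T"
      using yX unfolding ext_mistake_tree_def by blast
    then have "binom_le m (k+1) \<le> card (VS (thresholds Ts) [])" using ub[OF finH] by blast
    then have "binom_le m (k+1) \<le> n" using VS0 cardH by simp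
    then have "m \<in> S" by (simp add: S_def)
    then show ?thesis using \<open>y = enat m\<close> finS M_def by simp
  qed
  define xs where "xs = sorted_list_of_set Ts"
  have "sorted_wrt (<) xs" by (simp add: xs_def)
  moreover have "set xs \<subseteq> Ts" using assms(1) by (simp add: xs_def)
  moreover have "length xs = n" using assms(1,2) by (simp add: xs_def)
  moreover have "xs \<noteq> []" using calculation(3) assms(3) by auto
  ultimately have "\<exists>T. consistent_from (thresholds Ts) [] T \<and> difficult k M T"
    using lb[of xs Ts M k "[]"] MS unfolding S_def by simp
  then obtain T where "consistent_from (thresholds Ts) [] T" "difficult k M T" by blast
  then have "enat M \<in> ?X" by (auto simp: ext_mistake_tree_def)
  then have "Sup ?X = enat M" using up by (intro cSup_eq_maximum) auto
  then show ?thesis unfolding ELdim_def M_def S_def .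
qed

end
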